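(* Let $k$ be a positive integer. If $T$ is a semi-complete digraph with $n$ vertices that admits an ordering of cost at most $k$, then the number of $(4k)^{2/3}$-cuts of $T$ is at most $$A\cdot\exp\Bigl(2C\,(4k)^{1/3}\sqrt{1+\ln\bigl(2(4k)^{2/3}\bigr)}\Bigr)\cdot(n+1),$$ where $C=\pi\sqrt{2/3}$ and $A$ is a constant such that $p(m)\le\frac{A}{m+1}\exp(C\sqrt{m})$ for all integers $m\ge0$.
   Context: A simple digraph (no loops, no multiple arcs) $T$ is semi-complete if for every pair of distinct vertices $v,w$ at least one of $(v,w),(w,v)$ is an arc. The cost of an ordering $(v_1,\dots,v_n)$ of $V(T)$ is $\sum_{(v_i,v_j)\in E(T),\,i>j}(i-j)$. For real $d\ge 0$, a $d$-cut of a digraph $T$ is an ordered partition $(X,Y)$ of $V(T)$ (either part may be empty) such that there are at most $d$ arcs $(u,v)\in E(T)$ with $u\in Y$ and $v\in X$. $p(m)$ denotes the number of partitions of the integer $m$; such $A$ exists by the Hardy–Ramanujan estimate. *)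

theory Defs
  imports "HOL-Analysis.Analysis" "HOL-Library.Multiset"
begin

definition semi_complete :: "'a set \<Rightarrow> ('a \<times> 'a) set \<Rightarrow> bool" where
  "semi_complete V E \<longleftrightarrow> finite V \<and> E \<subseteq> V \<times> V \<and> (\<forall>v. (v, v) \<notin> E) \<and>
     (\<forall>v\<in>V. \<forall>w\<in>V. v \<noteq> w \<longrightarrow> (v, w) \<in> E \<or> (w, v) \<in> E)"

text \<open>An ordering of V is a list of the vertices without repetitions; positions are
  0-based here, which does not affect the differences i - j.\<close>

definition is_ordering :: "'a set \<Rightarrow> 'a list \<Rightarrow> bool" where
  "is_ordering V vs \<longleftrightarrow> distinct vs \<and> set vs = V"

definition ordering_cost :: "('a \<times> 'a) set \<Rightarrow> 'a list \<Rightarrow> nat" where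
  "ordering_cost E vs =
     (\<Sum>(i, j) \<in> {(i, j). i < length vs \<and> j < i \<and> (vs ! i, vs ! j) \<in> E}. i - j)"

definition d_cut :: "'a set \<Rightarrow> ('a \<times> 'a) set \<Rightarrow> real \<Rightarrow> 'a set \<times> 'a set \<Rightarrow> bool" where
  "d_cut V E d XY \<longleftrightarrow> (case XY of (X, Y) \<Rightarrow>
      X \<union> Y = V \<and> X \<inter> Y = {} \<and>
      real (card {(u, v) \<in> E. u \<in> Y \<and> v \<in> X}) \<le> d)"

definition num_d_cuts :: "'a set \<Rightarrow> ('a \<times> 'a) set \<Rightarrow> real \<Rightarrow> nat" where
  "num_d_cuts V E d = card {XY. d_cut V E d XY}"

definition partition_number :: "nat \<Rightarrow> nat" where
  "partition_number m = card {M :: nat multiset. (\<forall>x \<in># M. 0 < x) \<and> sum_mset M = m}"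

end

theory Submission
  imports Defs
begin

lemma core:
  fixes Xp :: "nat set" and L k :: nat and F :: "(nat \<times> nat) set"
  defines "P \<equiv> SIGMA j:Xp. {i. i < j \<and> i \<notin> Xp}"
  assumes fin: "finite Xp" and L: "L \<ge> 1" and FP: "F \<subseteq> P"
    and cost: "(\<Sum>(j,i)\<in>P - F. j - i) \<le> k"
  shows "L * (\<Sum>j\<in>Xp. card {i. i < j \<and> i \<notin> Xp}) \<le> 2 * L * card F + 2 * k + 2 * L * L * L"
proof -
  define b where "b j = card {i. i < j \<and> i \<notin> Xp}" for j
  define Lo where "Lo j = {i. i < j \<and> i \<notin> Xp \<and> i + L \<le> j}" for j
  define Sh where "Sh j = {i. i < j \<and> i \<notin> Xp \<and> j < i + L}" for j
  define r where "r i = card {a. a < i \<and> a \<notin> Xp}" for i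
  have finP: "finite P" unfolding P_def using fin by auto
  have finF: "finite F" using finP FP finite_subset by blast
  have bsplit: "b j = card (Lo j) + card (Sh j)" for j
  proof -
    have "{i. i < j \<and> i \<notin> Xp} = Lo j \<union> Sh j" unfolding Lo_def Sh_def by auto
    moreover have "Lo j \<inter> Sh j = {}" unfolding Lo_def Sh_def by auto
    ultimately show ?thesis unfolding b_def
      by (metis (no_types, lifting) card_Un_disjoint finite_Un finite_nat_set_iff_bounded_le mem_Collect_eq nat_less_le)
  qed
  have Shle: "card (Sh j) \<le> L" for j
  proof -
    have "Sh j \<subseteq> {j - L..<j}" unfolding Sh_def by auto
    then show ?thesis using card_mono[of "{j - L..<j}" "Sh j"] by simp
  qed
  have step1: "b j \<le> 2 * card (Lo j) + (if b j < 2 * L then card (Sh j) else 0)" for j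
    using bsplit[of j] Shle[of j] by auto
  have sum1: "(\<Sum>j\<in>Xp. b j) \<le> 2 * (\<Sum>j\<in>Xp. card (Lo j)) + (\<Sum>j\<in>Xp. (if b j < 2 * L then card (Sh j) else 0))"
    using sum_mono[of Xp b, OF step1] by (simp add: sum.distrib sum_distrib_left)
  define Lg where "Lg = (SIGMA j:Xp. Lo j)"
  have finLo: "finite (Lo j)" for j unfolding Lo_def by auto
  have cLg: "card Lg = (\<Sum>j\<in>Xp. card (Lo j))" unfolding Lg_def using fin finLo by simp
  have LgP: "Lg \<subseteq> P" unfolding Lg_def P_def Lo_def by auto
  have finLg: "finite Lg" using LgP finP finite_subset by blast
  have "L * card (Lg - F) = (\<Sum>(j,i)\<in>Lg - F. L)" by simp
  also have "\<dots> \<le> (\<Sum>(j,i)\<in>Lg - F. j - i)"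
    by (rule sum_mono) (auto simp: Lg_def Lo_def)
  also have "\<dots> \<le> (\<Sum>(j,i)\<in>P - F. j - i)"
    by (rule sum_mono2) (use finP LgP in auto)
  finally have c2: "L * card (Lg - F) \<le> k" using cost by linarith
  have "card Lg \<le> card (Lg \<inter> F) + card (Lg - F)"
    by (metis Int_Diff_Un card_Un_le)
  moreover have "card (Lg \<inter> F) \<le> card F" by (rule card_mono) (use finF in auto)
  ultimately have "L * card Lg \<le> L * card F + L * card (Lg - F)"
    by (metis add_le_mono1 distrib_left mult_le_mono2 order_trans)
  then have cLg2: "L * card Lg \<le> L * card F + k" using c2 by linarith
  define R where "R = {i. i \<notin> Xp \<and> r i < 2 * L}"
  have rmono: "r i < r i'" if "i < i'" "i \<notin> Xp" for i i'
  proof -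
    have "{a. a < i \<and> a \<notin> Xp} \<subset> {a. a < i' \<and> a \<notin> Xp}" using that by auto
    then show ?thesis unfolding r_def by (rule psubset_card_mono[rotated]) auto
  qed
  have injR: "inj_on r R"
  proof (rule inj_onI)
    fix x y assume "x \<in> R" "y \<in> R" "r x = r y"
    then show "x = y" using rmono[of x y] rmono[of y x] unfolding R_def
      by (metis less_irrefl linorder_neqE_nat mem_Collect_eq)
  qed
  have imR: "r ` R \<subseteq> {..<2 * L}" unfolding R_def by auto
  have finR: "finite R" using finite_imageD[OF finite_subset[OF imR] injR] by simp
  have cR: "card R \<le> 2 * L" using card_inj_on_le[OF injR imR] by simp
  define SS where "SS = (SIGMA j:{j\<in>Xp. b j < 2 * L}. Sh j)"
  have finSh: "finite (Sh j)" for j unfolding Sh_def by auto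
  have cSS: "card SS = (\<Sum>j\<in>{j\<in>Xp. b j < 2 * L}. card (Sh j))"
    unfolding SS_def using fin finSh by simp
  have sumif: "(\<Sum>j\<in>Xp. (if b j < 2 * L then card (Sh j) else 0)) = (\<Sum>j\<in>{j\<in>Xp. b j < 2 * L}. card (Sh j))"
    using fin by (simp add: sum.inter_filter)
  have SSsub: "SS \<subseteq> (\<lambda>(i,j). (j,i)) ` (SIGMA i:R. {i..<i+L})"
  proof
    fix p assume "p \<in> SS"
    then obtain j i where p: "p = (j,i)" "j \<in> Xp" "b j < 2 * L" "i < j" "i \<notin> Xp" "j < i + L"
      unfolding SS_def Sh_def by auto
    have "{a. a < i \<and> a \<notin> Xp} \<subset> {a. a < j \<and> a \<notin> Xp}" using p by auto
    then have "r i < b j" unfolding r_def b_def by (rule psubset_card_mono[rotated]) auto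
    then have "i \<in> R" using p unfolding R_def by auto
    then show "p \<in> (\<lambda>(i,j). (j,i)) ` (SIGMA i:R. {i..<i+L})" using p by force
  qed
  have "card SS \<le> card ((\<lambda>(i,j). (j,i)) ` (SIGMA i:R. {i..<i+L}))"
    by (rule card_mono) (use SSsub finR in auto)
  also have "\<dots> \<le> card (SIGMA i:R. {i..<i+L})" by (rule card_image_le) (use finR in auto)
  also have "\<dots> = card R * L" using finR by simp
  also have "\<dots> \<le> 2 * L * L" using cR by simp
  finally have cSS2: "card SS \<le> 2 * L * L" .
  have "(\<Sum>j\<in>Xp. b j) \<le> 2 * card Lg + 2 * L * L"
    using sum1 cLg cSS sumif cSS2 by linarith
  then have "L * (\<Sum>j\<in>Xp. b j) \<le> L * (2 * card Lg + 2 * L * L)" by simp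
  also have "\<dots> = 2 * (L * card Lg) + 2 * L * L * L" by (simp add: algebra_simps)
  also have "\<dots> \<le> 2 * (L * card F + k) + 2 * L * L * L" using cLg2 by simp
  finally show ?thesis unfolding b_def by (simp add: algebra_simps)
qed

definition bv :: "nat set \<Rightarrow> nat \<Rightarrow> nat" where
  "bv X j = card {i. i < j \<and> i \<notin> X}"

lemma bv_mono: "j \<le> j' \<Longrightarrow> bv X j \<le> bv X j'"
  unfolding bv_def by (rule card_mono) auto

lemma rank_sorted:
  assumes "finite X" "r < card X"
  shows "card {i\<in>X. i < sorted_list_of_set X ! r} = r"
proof -
  define ps where "ps = sorted_list_of_set X"
  have sw: "sorted_wrt (<) ps" unfolding ps_def by simp
  have len: "length ps = card X" unfolding ps_def by simp
  have sp: "set ps = X" unfolding ps_def using assms by simp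
  have "{i\<in>X. i < ps ! r} = set (take r ps)"
  proof
    show "{i \<in> X. i < ps ! r} \<subseteq> set (take r ps)"
    proof
      fix x assume x: "x \<in> {i \<in> X. i < ps ! r}"
      then obtain s where s: "s < length ps" "ps ! s = x" using sp by (auto simp: in_set_conv_nth)
      have "s < r"
      proof (rule ccontr)
        assume "\<not> s < r"
        then have "r \<le> s" by simp
        moreover have "sorted ps" unfolding ps_def by simp
        ultimately have "ps ! r \<le> ps ! s" using s by (metis sorted_nth_mono)
        then show False using x s by auto
      qed
      then show "x \<in> set (take r ps)" using s by (auto simp: in_set_conv_nth)
    qed
  next
    show "set (take r ps) \<subseteq> {i \<in> X. i < ps ! r}"
    proof
      fix x assume "x \<in> set (take r ps)"
      then obtain s where s: "s < r" "ps ! s = x" using len assms by (auto simp: in_set_conv_nth)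
      then have "x < ps ! r" using sw len assms by (metis sorted_wrt_nth_less)
      moreover have "x \<in> X" using s sp len assms by (metis nth_mem order.strict_trans)
      ultimately show "x \<in> {i \<in> X. i < ps ! r}" by simp
    qed
  qed
  moreover have "card (set (take r ps)) = r"
    using sw len assms by (simp add: distinct_card strict_sorted_iff)
  ultimately show ?thesis unfolding ps_def by simp
qed

lemma pos_eq:
  assumes "finite X" "r < card X"
  shows "sorted_list_of_set X ! r = bv X (sorted_list_of_set X ! r) + r"
proof -
  define p where "p = sorted_list_of_set X ! r"
  have "p = card {i. i < p}" by simp
  also have "\<dots> = card ({i\<in>X. i < p} \<union> {i. i < p \<and> i \<notin> X})"
    by (rule arg_cong[where f=card]) auto
  also have "\<dots> = card {i\<in>X. i < p} + card {i. i < p \<and> i \<notin> X}"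
    by (rule card_Un_disjoint) auto
  also have "\<dots> = r + bv X p" using rank_sorted[OF assms] unfolding p_def bv_def by simp
  finally show ?thesis unfolding p_def by simp
qed

lemma ms_props:
  assumes "finite X"
  shows "sorted (map (bv X) (sorted_list_of_set X))"
    "mset (map (bv X) (sorted_list_of_set X)) = image_mset (bv X) (mset_set X)"
proof -
  have "sorted (sorted_list_of_set X)" by simp
  then have "sorted_wrt (\<le>) (sorted_list_of_set X)" by simp
  then have "sorted_wrt (\<lambda>x y. bv X x \<le> bv X y) (sorted_list_of_set X)"
    by (rule sorted_wrt_mono_rel[rotated]) (auto intro: bv_mono)
  then show "sorted (map (bv X) (sorted_list_of_set X))" by (simp add: sorted_map)
  show "mset (map (bv X) (sorted_list_of_set X)) = image_mset (bv X) (mset_set X)"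
    by (metis mset_map mset_sorted_list_of_multiset sorted_list_of_mset_set)
qed

lemma recon:
  assumes "finite X1" "finite X2"
    and eq: "image_mset (bv X1) (mset_set X1) = image_mset (bv X2) (mset_set X2)"
  shows "X1 = X2"
proof -
  define m1 where "m1 = map (bv X1) (sorted_list_of_set X1)"
  define m2 where "m2 = map (bv X2) (sorted_list_of_set X2)"
  have "sort m2 = m1" by (rule properties_for_sort) (use ms_props[OF assms(1)] ms_props[OF assms(2)] eq in \<open>auto simp: m1_def m2_def\<close>)
  moreover have "sort m2 = m2" using ms_props[OF assms(2)] m2_def by (simp add: sorted_sort_id)
  ultimately have m: "m1 = m2" by simp
  then have cc: "card X1 = card X2" unfolding m1_def m2_def by (metis length_map length_sorted_list_of_set)
  have "sorted_list_of_set X1 = sorted_list_of_set X2"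
  proof (rule nth_equalityI)
    show "length (sorted_list_of_set X1) = length (sorted_list_of_set X2)" using cc by simp
    fix r assume "r < length (sorted_list_of_set X1)"
    then have r1: "r < card X1" and r2: "r < card X2" using cc by auto
    have "m1 ! r = m2 ! r" using m by simp
    then have "bv X1 (sorted_list_of_set X1 ! r) = bv X2 (sorted_list_of_set X2 ! r)"
      unfolding m1_def m2_def using r1 r2 by simp
    then show "sorted_list_of_set X1 ! r = sorted_list_of_set X2 ! r"
      using pos_eq[OF assms(1) r1] pos_eq[OF assms(2) r2] by simp
  qed
  then show ?thesis using assms by (metis set_sorted_list_of_set)
qed

lemma size_le_sum: "\<forall>x\<in>#M. 0 < (x::nat) \<Longrightarrow> size M \<le> sum_mset M"
  by (induction M) auto

lemma finite_parts: "finite {M :: nat multiset. (\<forall>x \<in># M. 0 < x) \<and> sum_mset M = m}"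
proof -
  have "{M :: nat multiset. (\<forall>x \<in># M. 0 < x) \<and> sum_mset M = m} \<subseteq> (\<Union>s\<in>{..m}. multisets_of_size {..m} s)"
  proof
    fix M :: "nat multiset" assume "M \<in> {M. (\<forall>x \<in># M. 0 < x) \<and> sum_mset M = m}"
    then have pos: "\<forall>x \<in># M. 0 < x" and s: "sum_mset M = m" by auto
    have "set_mset M \<subseteq> {..m}"
    proof
      fix x assume "x \<in># M"
      then obtain N where "M = add_mset x N" by (metis multi_member_split)
      then show "x \<in> {..m}" using s by auto
    qed
    moreover have "size M \<le> m"
      using size_le_sum[OF pos] s by simp
    ultimately have "M \<in> multisets_of_size {..m} (size M)" "size M \<in> {..m}"
      unfolding multisets_of_size_def by simp_all
    then show "M \<in> (\<Union>s\<in>{..m}. multisets_of_size {..m} s)" by (rule UN_I[rotated])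
  qed
  moreover have "finite (\<Union>s\<in>{..m}. multisets_of_size {..m} s)"
    by (rule finite_UN_I) (simp_all add: finite_multisets_of_size)
  ultimately show ?thesis using finite_subset by blast
qed

lemma cut_bound:
  assumes sc: "semi_complete V E" and ord: "is_ordering V vs" and cost: "ordering_cost E vs \<le> k"
    and cut: "d_cut V E d (X,Y)" and L: "L \<ge> 1"
  shows "real L * real (\<Sum>j\<in>{j. j < length vs \<and> vs ! j \<in> X}. bv {j. j < length vs \<and> vs ! j \<in> X} j)
     \<le> 2 * L * d + 2 * k + 2 * L * L * L"
proof -
  define n where "n = length vs"
  define Xp where "Xp = {j. j < n \<and> vs ! j \<in> X}"
  define P where "P = (SIGMA j:Xp. {i. i < j \<and> i \<notin> Xp})"
  define F where "F = {(j,i)\<in>P. (vs ! i, vs ! j) \<in> E}"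
  have dist: "distinct vs" and sV: "set vs = V" using ord unfolding is_ordering_def by auto
  have finV: "finite V" and EV: "E \<subseteq> V \<times> V" and irr: "\<forall>v. (v,v) \<notin> E"
    and tot: "\<forall>v\<in>V. \<forall>w\<in>V. v \<noteq> w \<longrightarrow> (v, w) \<in> E \<or> (w, v) \<in> E"
    using sc unfolding semi_complete_def by auto
  have XYV: "X \<union> Y = V" and XYd: "X \<inter> Y = {}"
    and cutc: "real (card {(u, v) \<in> E. u \<in> Y \<and> v \<in> X}) \<le> d"
    using cut unfolding d_cut_def by auto
  have finXp: "finite Xp" unfolding Xp_def by auto
  have FP: "F \<subseteq> P" unfolding F_def by auto
  have inV: "vs ! i \<in> V" if "i < n" for i using that sV n_def by auto
  have finCut: "finite {(u, v) \<in> E. u \<in> Y \<and> v \<in> X}"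
    by (rule finite_subset[of _ "V \<times> V"]) (use EV finV in auto)
  have injF: "inj_on (\<lambda>(j,i). (vs ! i, vs ! j)) F"
  proof (rule inj_onI, clarify)
    fix j i j' i' assume a: "(j,i) \<in> F" "(j',i') \<in> F" "vs ! i = vs ! i'" "vs ! j = vs ! j'"
    then have "j < n" "i < n" "j' < n" "i' < n" unfolding F_def P_def Xp_def by auto
    then show "j = j' \<and> i = i'" using a(3,4) dist n_def by (simp add: nth_eq_iff_index_eq)
  qed
  have imF: "(\<lambda>(j,i). (vs ! i, vs ! j)) ` F \<subseteq> {(u, v) \<in> E. u \<in> Y \<and> v \<in> X}"
  proof clarify
    fix j i assume a: "(j,i) \<in> F"
    then have ij: "i < j" "j < n" "i \<notin> Xp" "j \<in> Xp" "(vs ! i, vs ! j) \<in> E"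
      unfolding F_def P_def Xp_def by auto
    then have "vs ! i \<notin> X" unfolding Xp_def by auto
    moreover have "vs ! i \<in> V" using ij inV by auto
    ultimately have "vs ! i \<in> Y" using XYV by auto
    moreover have "vs ! j \<in> X" using ij unfolding Xp_def by auto
    ultimately show "(vs ! i, vs ! j) \<in> E \<and> vs ! i \<in> Y \<and> vs ! j \<in> X" using ij by auto
  qed
  have cF: "card F \<le> card {(u, v) \<in> E. u \<in> Y \<and> v \<in> X}"
    using card_inj_on_le[OF injF imF finCut] .
  have cFd: "real (card F) \<le> d" using cF cutc by linarith
  define CS where "CS = {(i, j). i < length vs \<and> j < i \<and> (vs ! i, vs ! j) \<in> E}"
  have finCS: "finite CS"
    by (rule finite_subset[of _ "{..<n} \<times> {..<n}"]) (auto simp: CS_def n_def)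
  have PFCS: "P - F \<subseteq> CS"
  proof clarify
    fix j i assume a: "(j,i) \<in> P" "(j,i) \<notin> F"
    then have ij: "i < j" "j < n" "i \<notin> Xp" "j \<in> Xp" "(vs ! i, vs ! j) \<notin> E"
      unfolding F_def P_def Xp_def by auto
    have "vs ! i \<noteq> vs ! j" using ij dist n_def by (simp add: nth_eq_iff_index_eq)
    then have "(vs ! j, vs ! i) \<in> E" using tot inV ij by (meson order.strict_trans)
    then show "(j,i) \<in> CS" using ij unfolding CS_def n_def by auto
  qed
  have "(\<Sum>(j,i)\<in>P - F. j - i) \<le> (\<Sum>(j,i)\<in>CS. j - i)"
    by (rule sum_mono2[OF finCS PFCS]) auto
  also have "\<dots> = ordering_cost E vs" unfolding ordering_cost_def CS_def by simp
  finally have costP: "(\<Sum>(j,i)\<in>P - F. j - i) \<le> k" using cost by linarith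
  have main: "L * (\<Sum>j\<in>Xp. card {i. i < j \<and> i \<notin> Xp}) \<le> 2 * L * card F + 2 * k + 2 * L * L * L"
    using core[OF finXp L FP[unfolded P_def] costP[unfolded P_def]] unfolding P_def .
  then have "real (L * (\<Sum>j\<in>Xp. bv Xp j)) \<le> real (2 * L * card F + 2 * k + 2 * L * L * L)"
    unfolding bv_def by (simp only: of_nat_le_iff)
  then have "real L * real (\<Sum>j\<in>Xp. bv Xp j) \<le> 2 * real L * real (card F) + 2 * real k + 2 * real L * real L * real L"
    by simp
  also have "\<dots> \<le> 2 * real L * d + 2 * real k + 2 * real L * real L * real L" using cFd by (simp add: mult_left_mono)
  finally show ?thesis unfolding Xp_def n_def by simp
qed

definition enc :: "nat set \<Rightarrow> nat multiset" where
  "enc Xp = filter_mset (\<lambda>v. 0 < v) (image_mset (\<lambda>j. card {i. i < j \<and> i \<notin> Xp}) (mset_set Xp))"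

lemma analytic:
  fixes k :: nat assumes k: "0 < k"
  defines "c \<equiv> (4 * real k) powr (1/3)"
  shows "nat \<lceil>c\<rceil> \<ge> 1" "(4 * real k) powr (2/3) = c^2"
    "2 * c^2 + 2 * real k / real (nat \<lceil>c\<rceil>) + 2 * (real (nat \<lceil>c\<rceil>))^2 \<le> 4 * c^2 * (1 + ln (2 * c^2))"
proof -
  have x: "4 * real k > 0" using k by simp
  have cpos: "c > 0" unfolding c_def using x by simp
  have c3: "c^3 = 4 * real k"
  proof -
    have "c^3 = c powr (real 3)" using cpos by (simp add: powr_realpow)
    also have "\<dots> = (4 * real k) powr (1/3 * 3)" unfolding c_def by (simp add: powr_powr)
    finally show ?thesis using x by simp
  qed
  show "(4 * real k) powr (2/3) = c^2"
  proof -
    have "c^2 = c powr (real 2)" using cpos by (simp add: powr_realpow)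
    also have "\<dots> = (4 * real k) powr (1/3 * 2)" unfolding c_def by (simp add: powr_powr)
    finally show ?thesis by simp
  qed
  define L where "L = nat \<lceil>c\<rceil>"
  have Lc: "real L \<ge> c" unfolding L_def using cpos by linarith
  have Lc1: "real L < c + 1" unfolding L_def using cpos by linarith
  show "nat \<lceil>c\<rceil> \<ge> 1" using cpos by linarith
  have k4: "real k \<ge> 1" using k by simp
  have cge: "c \<ge> (79/50)"
  proof (rule ccontr)
    assume "\<not> c \<ge> (79/50)"
    then have "c < (79/50)" by simp
    then have "c^3 < (79/50)^3" using cpos by (intro power_strict_mono) auto
    then show False using c3 k4 by (simp add: power3_eq_cube)
  qed
  have kL: "real k / real L \<le> c^2 / 4"
  proof -
    have "real k / real L \<le> real k / c" using Lc cpos by (intro divide_left_mono) auto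
    also have "\<dots> = c^2 / 4" using c3 cpos by (simp add: field_simps power3_eq_cube power2_eq_square)
    finally show ?thesis .
  qed
  have L2: "(real L)^2 \<le> (c+1)^2" using Lc1 cpos by (intro power_mono) auto
  have ln1: "ln (2 * c^2) \<ge> 1"
  proof -
    have "c * c \<ge> (79/50) * (79/50)" using cge by (intro mult_mono) auto
    then have "2 * c^2 \<ge> 3" by (simp add: power2_eq_square)
    then have "exp 1 \<le> 2 * c^2" using exp_le by linarith
    then show ?thesis using cpos by (metis ln_exp ln_le_cancel_iff exp_gt_zero order_less_le_trans)
  qed
  have "2 * c^2 + 2 * real k / real L + 2 * (real L)^2 \<le> 2 * c^2 + 2 * (c^2/4) + 2 * (c+1)^2"
    using kL L2 by linarith
  also have "\<dots> \<le> 8 * c^2"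
  proof -
    have h: "c * c \<ge> (79/50) * c" using cge cpos by (intro mult_right_mono) auto
    have e: "(c+1)*(c+1) = c*c + 2*c + 1" by algebra
    show ?thesis unfolding power2_eq_square using h e cge by linarith
  qed
  also have "\<dots> \<le> 4 * c^2 * (1 + ln (2 * c^2))"
  proof -
    have "4 * c^2 * 1 \<le> 4 * c^2 * ln (2 * c^2)" using ln1 cpos by (intro mult_left_mono) auto
    then show ?thesis by (simp add: algebra_simps)
  qed
  finally show "2 * c^2 + 2 * real k / real (nat \<lceil>c\<rceil>) + 2 * (real (nat \<lceil>c\<rceil>))^2 \<le> 4 * c^2 * (1 + ln (2 * c^2))"
    unfolding L_def .
qed

lemma enc_props:
  assumes "finite Xp"
  shows "sum_mset (enc Xp) = (\<Sum>j\<in>Xp. card {i. i < j \<and> i \<notin> Xp})"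
    "image_mset (\<lambda>j. card {i. i < j \<and> i \<notin> Xp}) (mset_set Xp) = enc Xp + replicate_mset (card Xp - size (enc Xp)) 0"
    "\<forall>x\<in>#enc Xp. 0 < x"
proof -
  define G where "G = image_mset (\<lambda>j. card {i. i < j \<and> i \<notin> Xp}) (mset_set Xp)"
  have part: "G = enc Xp + filter_mset (\<lambda>v. \<not> 0 < v) G"
    unfolding enc_def G_def[symmetric] by (rule multiset_partition)
  have z: "filter_mset (\<lambda>v. \<not> 0 < v) G = replicate_mset (count G 0) 0"
  proof -
    have "filter_mset (\<lambda>v. \<not> 0 < v) G = filter_mset (\<lambda>v. v = 0) G" by (rule filter_mset_cong) auto
    then show ?thesis by (simp add: filter_eq_replicate_mset)
  qed
  have sG: "size G = card Xp" unfolding G_def by simp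
  have "size G = size (enc Xp) + count G 0" using arg_cong[OF part, of size] z by simp
  then have "count G 0 = card Xp - size (enc Xp)" using sG by simp
  then show "image_mset (\<lambda>j. card {i. i < j \<and> i \<notin> Xp}) (mset_set Xp) = enc Xp + replicate_mset (card Xp - size (enc Xp)) 0"
    using part z G_def by simp
  have "sum_mset G = sum_mset (enc Xp)" using arg_cong[OF part, of sum_mset] z by simp
  moreover have "sum_mset G = (\<Sum>j\<in>Xp. card {i. i < j \<and> i \<notin> Xp})" unfolding G_def by (simp add: sum_unfold_sum_mset)
  ultimately show "sum_mset (enc Xp) = (\<Sum>j\<in>Xp. card {i. i < j \<and> i \<notin> Xp})" by simp
  show "\<forall>x\<in>#enc Xp. 0 < x" unfolding enc_def by simp
qed

lemma recover:
  assumes "X \<subseteq> set vs" shows "X = (\<lambda>j. vs ! j) ` {j. j < length vs \<and> vs ! j \<in> X}"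
proof
  show "X \<subseteq> (\<lambda>j. vs ! j) ` {j. j < length vs \<and> vs ! j \<in> X}"
  proof
    fix x assume x: "x \<in> X"
    then obtain j where "j < length vs" "vs ! j = x" using assms by (metis in_set_conv_nth subsetD)
    then show "x \<in> (\<lambda>j. vs ! j) ` {j. j < length vs \<and> vs ! j \<in> X}" using x by (intro rev_image_eqI[of j]) auto
  qed
qed auto

theorem mainTheorem14:
  fixes V :: "'a set" and E :: "('a \<times> 'a) set" and k :: nat and A :: real
  assumes "0 < k"
    and "semi_complete V E"
    and "\<exists>vs. is_ordering V vs \<and> ordering_cost E vs \<le> k"
    and "\<forall>m::nat. real (partition_number m)
            \<le> A / real (m + 1) * exp (pi * sqrt (2 / 3) * sqrt (real m))"
  shows "real (num_d_cuts V E ((4 * real k) powr (2 / 3)))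
    \<le> A * exp (2 * (pi * sqrt (2 / 3)) * (4 * real k) powr (1 / 3)
              * sqrt (1 + ln (2 * (4 * real k) powr (2 / 3))))
      * real (card V + 1)"
proof -
  obtain vs where ord: "is_ordering V vs" and cost: "ordering_cost E vs \<le> k" using assms(3) by blast
  define n where "n = length vs"
  have dist: "distinct vs" and sV: "set vs = V" using ord unfolding is_ordering_def by auto
  have nV: "n = card V" unfolding n_def using distinct_card[OF dist] sV by simp
  define c where "c = (4 * real k) powr (1/3)"
  define d where "d = (4 * real k) powr (2/3)"
  define L where "L = nat \<lceil>c\<rceil>"
  have L1: "L \<ge> 1" and dc: "d = c^2"
    and ana: "2 * c^2 + 2 * real k / real L + 2 * (real L)^2 \<le> 4 * c^2 * (1 + ln (2 * c^2))"
    using analytic[OF assms(1)] unfolding c_def[symmetric] d_def[symmetric] L_def[symmetric] by auto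
  have cpos: "c > 0" unfolding c_def using assms(1) by simp
  define Bd where "Bd = 2 * d + 2 * real k / real L + 2 * (real L)^2"
  define M where "M = nat \<lfloor>Bd\<rfloor>"
  define Xp where "Xp X = {j. j < n \<and> vs ! j \<in> X}" for X
  define cuts where "cuts = {XY. d_cut V E d XY}"
  define \<psi> where "\<psi> (XY :: 'a set \<times> 'a set) = (card (Xp (fst XY)), sum_mset (enc (Xp (fst XY))),
       enc (Xp (fst XY)) + replicate_mset (M - sum_mset (enc (Xp (fst XY)))) 1)" for XY
  define Pt where "Pt = {N :: nat multiset. (\<forall>x\<in>#N. 0 < x) \<and> sum_mset N = M}"
  define T where "T = {..n} \<times> {..M} \<times> Pt"
  have finXp: "finite (Xp X)" for X unfolding Xp_def by auto
  have bvfun: "bv X = (\<lambda>j. card {i. i < j \<and> i \<notin> X})" for X by (rule ext) (simp add: bv_def)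
  have sumM: "sum_mset (enc (Xp X)) \<le> M" if "(X,Y) \<in> cuts" for X Y
  proof -
    have cut: "d_cut V E d (X,Y)" using that unfolding cuts_def by simp
    define s where "s = (\<Sum>j\<in>Xp X. bv (Xp X) j)"
    have "real L * real s \<le> 2 * real L * d + 2 * real k + 2 * real L * real L * real L"
      using cut_bound[OF assms(2) ord cost cut L1] by (simp add: s_def Xp_def n_def)
    then have "real s \<le> (2 * real L * d + 2 * real k + 2 * real L * real L * real L) / real L"
      using L1 by (simp add: pos_le_divide_eq mult.commute)
    also have "\<dots> = Bd" unfolding Bd_def using L1 by (simp add: field_simps power2_eq_square)
    finally have "s \<le> M" unfolding M_def by (simp add: le_nat_floor)
    moreover have "sum_mset (enc (Xp X)) = s" unfolding s_def using enc_props(1)[OF finXp] bvfun by simp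
    ultimately show ?thesis by simp
  qed
  have im: "\<psi> ` cuts \<subseteq> T"
  proof (rule image_subsetI)
    fix XY assume a0: "XY \<in> cuts"
    obtain X Y where xy: "XY = (X,Y)" by (cases XY)
    have a: "(X,Y) \<in> cuts" using a0 xy by simp
    have "card (Xp X) \<le> n"
      using card_mono[of "{..<n}" "Xp X"] unfolding Xp_def by auto
    moreover have "(\<forall>x\<in>#enc (Xp X) + replicate_mset (M - sum_mset (enc (Xp X))) 1. 0 < x)"
      using enc_props(3)[OF finXp] by auto
    moreover have "sum_mset (enc (Xp X) + replicate_mset (M - sum_mset (enc (Xp X))) 1) = M"
      using sumM[OF a] by simp
    ultimately show "\<psi> XY \<in> T" unfolding xy \<psi>_def T_def Pt_def using sumM[OF a] by auto
  qed
  have inj: "inj_on \<psi> cuts"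
  proof (rule inj_onI, clarify)
    fix X1 Y1 X2 Y2 assume a1: "(X1,Y1) \<in> cuts" and a2: "(X2,Y2) \<in> cuts" and eq: "\<psi> (X1,Y1) = \<psi> (X2,Y2)"
    have c1: "card (Xp X1) = card (Xp X2)" and s1: "sum_mset (enc (Xp X1)) = sum_mset (enc (Xp X2))"
      using eq unfolding \<psi>_def by auto
    then have "enc (Xp X1) = enc (Xp X2)" using eq unfolding \<psi>_def by auto
    then have "image_mset (bv (Xp X1)) (mset_set (Xp X1)) = image_mset (bv (Xp X2)) (mset_set (Xp X2))"
      using enc_props(2)[OF finXp, of X1] enc_props(2)[OF finXp, of X2] c1 bvfun by simp
    then have xp: "Xp X1 = Xp X2" using recon finXp by blast
    have u1: "X1 \<union> Y1 = V" "X1 \<inter> Y1 = {}" and u2: "X2 \<union> Y2 = V" "X2 \<inter> Y2 = {}"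
      using a1 a2 unfolding cuts_def d_cut_def by auto
    have "X1 = (\<lambda>j. vs ! j) ` Xp X1" unfolding Xp_def n_def by (rule recover) (use u1 sV in auto)
    also have "\<dots> = (\<lambda>j. vs ! j) ` Xp X2" using xp by simp
    also have "\<dots> = X2" unfolding Xp_def n_def by (rule recover[symmetric]) (use u2 sV in auto)
    finally have x: "X1 = X2" .
    then have "Y1 = Y2" using u1 u2 by blast
    then show "X1 = X2 \<and> Y1 = Y2" using x by simp
  qed
  have finPt: "finite Pt" unfolding Pt_def by (rule finite_parts)
  have finT: "finite T" unfolding T_def using finPt by auto
  have cT: "card T = (n+1) * (M+1) * partition_number M"
  proof -
    have "card T = card {..n} * (card {..M} * card Pt)" unfolding T_def by (simp add: card_cartesian_product)
    also have "card Pt = partition_number M" unfolding Pt_def partition_number_def by simp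
    finally show ?thesis by (simp add: algebra_simps)
  qed
  have "card cuts \<le> card T" using card_inj_on_le[OF inj im finT] .
  then have cc: "real (num_d_cuts V E d) \<le> real (n+1) * real (M+1) * real (partition_number M)"
    unfolding num_d_cuts_def cuts_def[symmetric] cT by (metis of_nat_le_iff of_nat_mult)
  define C where "C = pi * sqrt (2/3)"
  have pM: "real (partition_number M) \<le> A / real (M + 1) * exp (C * sqrt (real M))"
    using assms(4) unfolding C_def by blast
  have A0: "A \<ge> 0"
  proof -
    have "0 \<le> A / real (M + 1) * exp (C * sqrt (real M))" using pM of_nat_0_le_iff order_trans by blast
    moreover have "A / real (M+1) = (A / real (M + 1) * exp (C * sqrt (real M))) / exp (C * sqrt (real M))" by simp
    ultimately have "0 \<le> A / real (M+1)" by (metis divide_nonneg_pos exp_gt_zero)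
    then show ?thesis by (simp add: zero_le_divide_iff)
  qed
  have Bd0: "Bd \<ge> 0" unfolding Bd_def dc by simp
  have MB: "real M \<le> Bd" unfolding M_def using Bd0 by linarith
  have B4: "Bd \<le> 4 * c^2 * (1 + ln (2 * d))" unfolding Bd_def dc using ana by simp
  have sq: "sqrt (real M) \<le> 2 * c * sqrt (1 + ln (2 * d))"
  proof -
    have "sqrt (real M) \<le> sqrt (4 * c^2 * (1 + ln (2 * d)))" using MB B4 by simp
    also have "\<dots> = 2 * c * sqrt (1 + ln (2 * d))"
      using cpos by (simp add: real_sqrt_mult)
    finally show ?thesis .
  qed
  have Cpos: "C \<ge> 0" unfolding C_def by simp
  have "real (num_d_cuts V E d) \<le> real (n+1) * real (M+1) * (A / real (M + 1) * exp (C * sqrt (real M)))"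
    using cc pM by (meson mult_left_mono of_nat_0_le_iff order_trans zero_le_mult_iff)
  also have "\<dots> = real (n+1) * A * exp (C * sqrt (real M))" by (simp add: field_simps)
  also have "\<dots> \<le> real (n+1) * A * exp (2 * C * c * sqrt (1 + ln (2 * d)))"
  proof -
    have "C * sqrt (real M) \<le> C * (2 * c * sqrt (1 + ln (2 * d)))" using sq Cpos by (rule mult_left_mono)
    then show ?thesis using A0 by (intro mult_left_mono) (auto simp: algebra_simps)
  qed
  finally show ?thesis unfolding C_def c_def d_def nV by (simp add: algebra_simps)
qed

end
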